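(* For any edge-coloured digraph $G$, the number $P(G,p)$ of proper vertex-colourings of $G$ using colours from $[p]=\{1,\dots,p\}$ is a polynomial in $p$.
   Context: An edge-coloured digraph is a finite simple digraph $G$ (no loops; for distinct vertices $a,b$ at most one edge from $a$ to $b$) in which every edge is of one of three types: dashed ($a\dashrightarrow b$), solid ($a\rightarrow b$) or double ($a\Rightarrow b$). A proper vertex-colouring with colours in $[p]$ is a function $\kappa:V(G)\to[p]$ such that for each edge $(a,b)$: $\kappa(a)\ne\kappa(b)$ if dashed, $\kappa(a)<\kappa(b)$ if solid, $\kappa(a)\le\kappa(b)$ if double. *)

theory Defs
  imports Main "HOL-Library.FuncSet" "HOL-Computational_Algebra.Polynomial"
begin

datatype edge_type = Dashed | Solid | Double

text \<open>An edge-coloured digraph: finite vertex set V, and a partial map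
  E a b giving the type of the (unique, if any) edge from a to b.\<close>
definition edge_coloured_digraph :: "'v set \<Rightarrow> ('v \<Rightarrow> 'v \<Rightarrow> edge_type option) \<Rightarrow> bool" where
  "edge_coloured_digraph V E \<longleftrightarrow> finite V
     \<and> (\<forall>a. E a a = None)
     \<and> (\<forall>a b. E a b \<noteq> None \<longrightarrow> a \<in> V \<and> b \<in> V)"

definition edge_ok :: "edge_type \<Rightarrow> nat \<Rightarrow> nat \<Rightarrow> bool" where
  "edge_ok t x y = (case t of Dashed \<Rightarrow> x \<noteq> y | Solid \<Rightarrow> x < y | Double \<Rightarrow> x \<le> y)"

definition proper_colouring :: "'v set \<Rightarrow> ('v \<Rightarrow> 'v \<Rightarrow> edge_type option) \<Rightarrow> nat \<Rightarrow> ('v \<Rightarrow> nat) \<Rightarrow> bool" where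
  "proper_colouring V E p \<kappa> \<longleftrightarrow> (\<forall>v\<in>V. \<kappa> v \<in> {1..p})
     \<and> (\<forall>a b t. E a b = Some t \<longrightarrow> edge_ok t (\<kappa> a) (\<kappa> b))"

definition num_colourings :: "'v set \<Rightarrow> ('v \<Rightarrow> 'v \<Rightarrow> edge_type option) \<Rightarrow> nat \<Rightarrow> nat" where
  "num_colourings V E p = card {\<kappa> \<in> V \<rightarrow>\<^sub>E {1..p}. proper_colouring V E p \<kappa>}"

end

theory Submission
  imports Defs
begin

inductive bpoly :: "(nat \<Rightarrow> real) \<Rightarrow> bool" where
  B0: "bpoly (\<lambda>p. 0)"
| Bc: "bpoly (\<lambda>p. c * real (p choose k))"
| Badd: "bpoly f \<Longrightarrow> bpoly g \<Longrightarrow> bpoly (\<lambda>p. f p + g p)"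

lemma choose_real_poly: "\<exists>q :: real poly. \<forall>p. real (p choose k) = poly q (real p)"
proof -
  have "real (p choose k) = poly (smult (1 / fact k) (\<Prod>i=0..<k. [:- of_nat i, 1:])) (real p)" for p
    by (simp add: binomial_gbinomial gbinomial_prod_rev poly_prod divide_inverse mult.commute)
  then show ?thesis by blast
qed

lemma bpoly_poly: "bpoly f \<Longrightarrow> \<exists>q :: real poly. \<forall>p. f p = poly q (real p)"
proof (induction rule: bpoly.induct)
  case B0
  then show ?case by (rule exI[of _ 0]) simp
next
  case (Bc c k)
  obtain q where q: "\<forall>p. real (p choose k) = poly q (real p)" using choose_real_poly by blast
  show ?case by (rule exI[of _ "smult c q"]) (simp add: q)
next
  case (Badd f g)
  then obtain q r where "\<forall>p. f p = poly q (real p)" "\<forall>p. g p = poly r (real p)" by blast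
  then show ?case by (intro exI[of _ "q + r"]) simp
qed

lemma bpoly_sum: "finite A \<Longrightarrow> (\<forall>S\<in>A. bpoly (F S)) \<Longrightarrow> bpoly (\<lambda>p. \<Sum>S\<in>A. F S p)"
proof (induction A rule: finite_induct)
  case empty
  then show ?case by (simp add: B0)
next
  case (insert x F)
  then show ?case by (simp add: Badd)
qed

lemma hockey: "(\<Sum>j<p. real (j choose k)) = real (p choose Suc k)"
  by (induction p) simp_all

lemma bpoly_antidiff: "bpoly g \<Longrightarrow> bpoly (\<lambda>p. \<Sum>j<p. g j)"
proof (induction rule: bpoly.induct)
  case B0
  then show ?case by (simp add: bpoly.B0)
next
  case (Bc c k)
  have "(\<lambda>p. \<Sum>j<p. c * real (j choose k)) = (\<lambda>p. c * real (p choose Suc k))"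
    by (simp add: sum_distrib_left[symmetric] hockey)
  then show ?case using bpoly.Bc by metis
next
  case (Badd f g)
  then show ?case by (simp add: sum.distrib bpoly.Badd)
qed

lemma bpoly_rec:
  assumes "bpoly g" "\<And>p. f (Suc p) = f p + g p"
  shows "bpoly f"
proof -
  have "f p = f 0 * real (p choose 0) + (\<Sum>j<p. g j)" for p
    by (induction p) (simp_all add: assms(2))
  then have "f = (\<lambda>p. f 0 * real (p choose 0) + (\<Sum>j<p. g j))" by blast
  then show ?thesis using Badd[OF Bc bpoly_antidiff[OF assms(1)]] by metis
qed

definition ncol :: "('v \<Rightarrow> 'v \<Rightarrow> edge_type option) \<Rightarrow> 'v set \<Rightarrow> nat \<Rightarrow> nat" where
  "ncol E W p = card {\<kappa> \<in> W \<rightarrow>\<^sub>E {1..p}. \<forall>a\<in>W. \<forall>b\<in>W. \<forall>t. E a b = Some t \<longrightarrow> edge_ok t (\<kappa> a) (\<kappa> b)}"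

definition valid :: "('v \<Rightarrow> 'v \<Rightarrow> edge_type option) \<Rightarrow> 'v set \<Rightarrow> 'v set \<Rightarrow> bool" where
  "valid E W S \<longleftrightarrow> (\<forall>a\<in>S. \<forall>b\<in>W. \<forall>t. E a b = Some t \<longrightarrow> (if b \<in> S then t = Double else t = Dashed))"

lemma fiber_card:
  assumes "S \<subseteq> W" "S \<noteq> {}"
  shows "card {\<kappa> \<in> {\<kappa> \<in> W \<rightarrow>\<^sub>E {1..Suc p}. \<forall>a\<in>W. \<forall>b\<in>W. \<forall>t. E a b = Some t \<longrightarrow> edge_ok t (\<kappa> a) (\<kappa> b)}.
      {v \<in> W. \<kappa> v = Suc p} = S} = (if valid E W S then ncol E (W - S) p else 0)"
    (is "card ?F = _")
proof (cases "valid E W S")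
  case True
  let ?G = "{\<kappa> \<in> (W - S) \<rightarrow>\<^sub>E {1..p}. \<forall>a\<in>W - S. \<forall>b\<in>W - S. \<forall>t. E a b = Some t \<longrightarrow> edge_ok t (\<kappa> a) (\<kappa> b)}"
  have "bij_betw (\<lambda>\<kappa>. restrict \<kappa> (W - S)) ?F ?G"
  proof (rule bij_betw_byWitness[where f' = "\<lambda>\<kappa> v. if v \<in> S then Suc p else \<kappa> v"])
    show "\<forall>a\<in>?F. (\<lambda>v. if v \<in> S then Suc p else restrict a (W - S) v) = a"
    proof
      fix k assume k: "k \<in> ?F"
      show "(\<lambda>v. if v \<in> S then Suc p else restrict k (W - S) v) = k"
      proof
        fix v show "(if v \<in> S then Suc p else restrict k (W - S) v) = k v"
          using k assms(1) by (cases "v \<in> W") (auto simp: PiE_iff extensional_def)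
      qed
    qed
    show "\<forall>a'\<in>?G. restrict (\<lambda>v. if v \<in> S then Suc p else a' v) (W - S) = a'"
    proof
      fix k assume k: "k \<in> ?G"
      show "restrict (\<lambda>v. if v \<in> S then Suc p else k v) (W - S) = k"
      proof
        fix v show "restrict (\<lambda>v. if v \<in> S then Suc p else k v) (W - S) v = k v"
          using k by (cases "v \<in> W - S") (auto simp: PiE_iff extensional_def)
      qed
    qed
    show "(\<lambda>\<kappa>. restrict \<kappa> (W - S)) ` ?F \<subseteq> ?G"
    proof
      fix k' assume "k' \<in> (\<lambda>\<kappa>. restrict \<kappa> (W - S)) ` ?F"
      then obtain k where k: "k \<in> ?F" and k': "k' = restrict k (W - S)" by blast
      have "k v \<in> {1..p}" if "v \<in> W - S" for v
        using k that by (auto simp: PiE_iff le_Suc_eq)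
      then show "k' \<in> ?G" using k k' by (auto simp: PiE_iff)
    qed
    show "(\<lambda>\<kappa> v. if v \<in> S then Suc p else \<kappa> v) ` ?G \<subseteq> ?F"
    proof
      fix k' assume "k' \<in> (\<lambda>\<kappa> v. if v \<in> S then Suc p else \<kappa> v) ` ?G"
      then obtain k where k: "k \<in> ?G" and k': "k' = (\<lambda>v. if v \<in> S then Suc p else k v)" by blast
      have r: "k v \<in> {1..p}" if "v \<in> W - S" for v using k that by auto
      have ok: "edge_ok t (k' a) (k' b)" if "a \<in> W" "b \<in> W" "E a b = Some t" for a b t
      proof -
        consider "a \<in> S" "b \<in> S" | "a \<in> S" "b \<notin> S" | "a \<notin> S" "b \<in> S" | "a \<notin> S" "b \<notin> S" by blast
        then show ?thesis
        proof cases
          case 1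
          then have "t = Double" using True that unfolding valid_def by force
          then show ?thesis using 1 k' by (simp add: edge_ok_def)
        next
          case 2
          then have "t = Dashed" using True that unfolding valid_def by force
          then show ?thesis using 2 k' r[of b] that by (simp add: edge_ok_def)
        next
          case 3
          then show ?thesis using k' r[of a] that by (cases t) (auto simp: edge_ok_def)
        next
          case 4
          then show ?thesis using k k' that by auto
        qed
      qed
      have "k' \<in> W \<rightarrow>\<^sub>E {1..Suc p}" using k k' assms(1)
        by (auto simp: PiE_iff extensional_def) (meson DiffI le_SucI)
      moreover have "{v \<in> W. k' v = Suc p} = S" using k' r assms(1) by force
      ultimately show "k' \<in> ?F" using ok by blast
    qed
  qed
  then have "card ?F = card ?G" by (rule bij_betw_same_card)
  then show ?thesis using True by (simp add: ncol_def)
next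
  case False
  have "?F = {}"
  proof (rule ccontr)
    assume "?F \<noteq> {}"
    then obtain k where k: "k \<in> ?F" by blast
    from False obtain a b t where ab: "a \<in> S" "b \<in> W" "E a b = Some t"
      "\<not> (if b \<in> S then t = Double else t = Dashed)" unfolding valid_def by blast
    have ok: "edge_ok t (k a) (k b)" using k ab assms(1) by blast
    have ka: "k a = Suc p" using k ab(1) by blast
    show False
    proof (cases "b \<in> S")
      case True
      then have "k b = Suc p" using k by blast
      then show False using ok ka ab(4) True by (cases t) (auto simp: edge_ok_def)
    next
      case bF: False
      then have "k b \<le> Suc p" "k b \<noteq> Suc p" using k ab(2) by (auto simp: PiE_iff)
      then show False using ok ka ab(4) bF by (cases t) (auto simp: edge_ok_def)
    qed
  qed
  then have "card ?F = 0" by (simp only: card.empty)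
  then show ?thesis using False by simp
qed

lemma ncol_rec:
  assumes "finite W"
  shows "real (ncol E W (Suc p)) = real (ncol E W p) +
     (\<Sum>S\<in>Pow W - {{}}. if valid E W S then real (ncol E (W - S) p) else 0)"
proof -
  let ?A = "{\<kappa> \<in> W \<rightarrow>\<^sub>E {1..Suc p}. \<forall>a\<in>W. \<forall>b\<in>W. \<forall>t. E a b = Some t \<longrightarrow> edge_ok t (\<kappa> a) (\<kappa> b)}"
  let ?g = "\<lambda>\<kappa>. {v \<in> W. \<kappa> v = Suc p}"
  have "finite (W \<rightarrow>\<^sub>E {1..Suc p})" by (rule finite_PiE) (auto simp: assms)
  then have finA: "finite ?A" by (rule finite_subset[rotated]) auto
  have "card ?A = (\<Sum>x\<in>?A. 1)" by simp
  also have "\<dots> = (\<Sum>S\<in>Pow W. \<Sum>x\<in>{x. x \<in> ?A \<and> ?g x = S}. 1)"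
    by (rule sum.group[symmetric]) (use finA assms in auto)
  also have "\<dots> = (\<Sum>S\<in>Pow W. card {\<kappa> \<in> ?A. ?g \<kappa> = S})" by simp
  also have "\<dots> = card {\<kappa> \<in> ?A. ?g \<kappa> = {}} + (\<Sum>S\<in>Pow W - {{}}. card {\<kappa> \<in> ?A. ?g \<kappa> = S})"
    using assms by (subst sum.remove[of _ "{}"]) auto
  also have "{\<kappa> \<in> ?A. ?g \<kappa> = {}} = {\<kappa> \<in> W \<rightarrow>\<^sub>E {1..p}. \<forall>a\<in>W. \<forall>b\<in>W. \<forall>t. E a b = Some t \<longrightarrow> edge_ok t (\<kappa> a) (\<kappa> b)}"
    by (auto simp: PiE_iff le_Suc_eq)
  also have "(\<Sum>S\<in>Pow W - {{}}. card {\<kappa> \<in> ?A. ?g \<kappa> = S}) = (\<Sum>S\<in>Pow W - {{}}. if valid E W S then ncol E (W - S) p else 0)"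
    by (rule sum.cong[OF refl], rule fiber_card) auto
  finally show ?thesis unfolding ncol_def by (simp add: of_nat_sum if_distrib cong: if_cong)
qed

lemma ncol_bpoly: "finite W \<Longrightarrow> bpoly (\<lambda>p. real (ncol E W p))"
proof (induction "card W" arbitrary: W rule: less_induct)
  case less
  let ?g = "\<lambda>p. \<Sum>S\<in>Pow W - {{}}. if valid E W S then real (ncol E (W - S) p) else 0"
  have "bpoly (\<lambda>p. if valid E W S then real (ncol E (W - S) p) else 0)" if "S \<in> Pow W - {{}}" for S
  proof (cases "valid E W S")
    case True
    have "card (W - S) < card W" using that less.prems
      by (metis Diff_iff Pow_iff card_Diff_subset card_gt_0_iff diff_less finite_subset insertCI subset_empty)
    then have "bpoly (\<lambda>p. real (ncol E (W - S) p))" using less.hyps less.prems by simp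
    then show ?thesis using True by simp
  next
    case False
    then show ?thesis by (simp add: B0)
  qed
  then have "bpoly ?g" using less.prems by (intro bpoly_sum) auto
  then show ?case by (rule bpoly_rec) (rule ncol_rec[OF less.prems])
qed

theorem mainTheorem5:
  fixes V :: "'v set" and E :: "'v \<Rightarrow> 'v \<Rightarrow> edge_type option"
  assumes "edge_coloured_digraph V E"
  shows "\<exists>q :: real poly. \<forall>p :: nat. real (num_colourings V E p) = poly q (real p)"
proof -
  have fin: "finite V" and inV: "\<And>a b. E a b \<noteq> None \<Longrightarrow> a \<in> V \<and> b \<in> V"
    using assms unfolding edge_coloured_digraph_def by auto
  have "num_colourings V E p = ncol E V p" for p
  proof -
    have "{\<kappa> \<in> V \<rightarrow>\<^sub>E {1..p}. proper_colouring V E p \<kappa>} =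
          {\<kappa> \<in> V \<rightarrow>\<^sub>E {1..p}. \<forall>a\<in>V. \<forall>b\<in>V. \<forall>t. E a b = Some t \<longrightarrow> edge_ok t (\<kappa> a) (\<kappa> b)}"
      unfolding proper_colouring_def using inV by (auto simp: PiE_iff) fastforce
    then show ?thesis unfolding num_colourings_def ncol_def by simp
  qed
  then show ?thesis using bpoly_poly[OF ncol_bpoly[OF fin, of E]] by simp
qed

end
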